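(* Let $A$ be a set of regular cardinals without a maximum, and let $\kappa\in\operatorname{spec}(A)$ with $\kappa\geq\sup(A)$. Let $\mathcal{F}\subseteq\prod A$ be any set of size $\kappa$ such that every $\kappa$-sized subset of $\mathcal{F}$ is unbounded in $(\prod A,<)$. Then for every $\mathcal{F}_0\subseteq\mathcal{F}$ of size $\kappa$, the set $\operatorname{ub}(\mathcal{F}_0)$ is infinite.
   Context: $\prod A$ is the set of functions $f$ on $A$ with $f(a)\in a$, ordered pointwise ($f<g$ iff $f(a)<g(a)$ for all $a\in A$). $\operatorname{spec}(A)$ is the set of regular $\lambda$ for which some $\mathcal{F}\subseteq\prod A$ of size $\lambda$ has every $\lambda$-sized subset unbounded in $(\prod A,<)$. For $\mathcal{G}\subseteq\prod A$, $\operatorname{ub}(\mathcal{G})$ is the set of $a\in A$ such that $\{f(a):f\in\mathcal{G}\}$ is unbounded in $a$. *)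

theory Defs
  imports Main "HOL-Library.FuncSet"
begin

text \<open>Ordinals are modelled as elements of an arbitrary well-ordered type 'o;
  the ordinal alpha is identified with its initial segment {..<alpha}.\<close>

definition is_cardinal :: "'o::wellorder \<Rightarrow> bool" where
  "is_cardinal \<alpha> \<longleftrightarrow> (\<forall>\<beta><\<alpha>. (card_of {..<\<beta>}, card_of {..<\<alpha>}) \<notin> ordIso)"

definition regular_cardinal :: "'o::wellorder \<Rightarrow> bool" where
  "regular_cardinal \<alpha> \<longleftrightarrow> is_cardinal \<alpha> \<and> infinite {..<\<alpha>} \<and>
     (\<forall>X \<subseteq> {..<\<alpha>}. (\<forall>\<beta><\<alpha>. \<exists>\<gamma>\<in>X. \<beta> \<le> \<gamma>) \<longrightarrow> (card_of X, card_of {..<\<alpha>}) \<in> ordIso)"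

definition prodA :: "'o::wellorder set \<Rightarrow> ('o \<Rightarrow> 'o) set" where
  "prodA A = (\<Pi>\<^sub>E a\<in>A. {..<a})"

definition ptw_less :: "'o::wellorder set \<Rightarrow> ('o \<Rightarrow> 'o) \<Rightarrow> ('o \<Rightarrow> 'o) \<Rightarrow> bool" where
  "ptw_less A f g \<longleftrightarrow> (\<forall>a\<in>A. f a < g a)"

definition unbounded_in_prod :: "'o::wellorder set \<Rightarrow> ('o \<Rightarrow> 'o) set \<Rightarrow> bool" where
  "unbounded_in_prod A G \<longleftrightarrow> \<not> (\<exists>g\<in>prodA A. \<forall>f\<in>G. ptw_less A f g)"

definition in_spec :: "'o::wellorder set \<Rightarrow> 'k rel \<Rightarrow> bool" where
  "in_spec A \<kappa> \<longleftrightarrow> Cinfinite \<kappa> \<and> regularCard \<kappa> \<and>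
     (\<exists>F \<subseteq> prodA A. (card_of F, \<kappa>) \<in> ordIso \<and>
        (\<forall>G \<subseteq> F. (card_of G, \<kappa>) \<in> ordIso \<longrightarrow> unbounded_in_prod A G))"

definition ub :: "'o::wellorder set \<Rightarrow> ('o \<Rightarrow> 'o) set \<Rightarrow> 'o set" where
  "ub A G = {a\<in>A. \<not> (\<exists>\<beta><a. \<forall>f\<in>G. f a \<le> \<beta>)}"

end

theory Submission
  imports Defs
begin

unbundle cardinal_syntax

lemma inf_card_of_insert:
  assumes "\<not>finite A"
  shows "|insert a A| =o |A|"
proof-
  have iA: "insert a A = A \<union> {a}" by simp
  show ?thesis
    using infinite_imp_bij_betw2[OF assms] unfolding iA
    by (metis bij_betw_inv card_of_ordIso)
qed

lemma between:
  fixes a b :: "'o::wellorder"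
  assumes r: "regular_cardinal a" and ba: "b < a"
  shows "\<exists>c. b < c \<and> c < a"
proof (rule ccontr)
  assume "\<not> ?thesis"
  hence "\<forall>c. c \<le> b \<or> a \<le> c" by (auto simp: not_less)
  hence eq: "{..<a} = insert b {..<b}" using ba
    by (auto simp: not_less) (metis leD order.order_iff_strict)
  have inf: "infinite {..<a}" using r by (simp add: regular_cardinal_def)
  hence "infinite {..<b}" using eq by auto
  hence "|{..<a}| =o |{..<b}|" using eq inf_card_of_insert by metis
  hence "|{..<b}| =o |{..<a}|" using ordIso_symmetric by blast
  moreover have "is_cardinal a" using r by (simp add: regular_cardinal_def)
  ultimately show False using ba by (auto simp: is_cardinal_def)
qed

lemma small_elem:
  fixes A :: "'o::wellorder set" and \<kappa> :: "'k rel"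
  assumes "\<forall>a\<in>A. regular_cardinal a"
    and "\<not> (\<exists>m\<in>A. \<forall>a\<in>A. a \<le> m)"
    and "\<forall>a\<in>A. (card_of {..<a}, \<kappa>) \<in> ordLeq"
    and "a \<in> A"
  shows "|{..<a}| <o \<kappa>"
proof -
  obtain a' where a': "a' \<in> A" "\<not> a' \<le> a" using assms(2,4) by blast
  hence lt: "a < a'" by simp
  have "|{..<a}| \<le>o |{..<a'}|" by (rule card_of_mono1) (use lt in auto)
  moreover have "\<not> |{..<a}| =o |{..<a'}|"
    using assms(1) a'(1) lt by (auto simp: regular_cardinal_def is_cardinal_def)
  ultimately have "|{..<a}| <o |{..<a'}|" using ordLeq_iff_ordLess_or_ordIso by blast
  thus ?thesis using assms(3) a'(1) ordLess_ordLeq_trans by blast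
qed

lemma shrink:
  fixes \<kappa> :: "'k rel" and G :: "('o::wellorder \<Rightarrow> 'o) set"
  assumes reg: "regularCard \<kappa>" and ci: "Cinfinite \<kappa>"
    and G: "G \<subseteq> prodA A" "|G| =o \<kappa>" and a: "a \<in> A" "|{..<a}| <o \<kappa>"
  shows "\<exists>G'\<subseteq>G. |G'| =o \<kappa> \<and> (\<exists>\<beta><a. \<forall>f\<in>G'. f a \<le> \<beta>)"
proof (rule ccontr)
  assume nt: "\<not> ?thesis"
  have "\<forall>\<beta>\<in>{..<a}. |{f\<in>G. f a = \<beta>}| <o \<kappa>"
  proof
    fix \<beta> assume b: "\<beta> \<in> {..<a}"
    have "|{f\<in>G. f a = \<beta>}| \<le>o |G|" by (rule card_of_mono1) auto
    hence le: "|{f\<in>G. f a = \<beta>}| \<le>o \<kappa>" using G(2) ordLeq_ordIso_trans by blast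
    have "\<not> |{f\<in>G. f a = \<beta>}| =o \<kappa>" using nt b
      by (metis (mono_tags, lifting) lessThan_iff mem_Collect_eq order_refl subsetI)
    thus "|{f\<in>G. f a = \<beta>}| <o \<kappa>" using le ordLeq_iff_ordLess_or_ordIso by blast
  qed
  hence "|\<Union>\<beta>\<in>{..<a}. {f\<in>G. f a = \<beta>}| <o \<kappa>"
    by (rule card_of_UNION_ordLess_infinite_Field_regularCard[OF reg ci a(2)])
  moreover have "(\<Union>\<beta>\<in>{..<a}. {f\<in>G. f a = \<beta>}) = G"
    using G(1) a(1) by (auto simp: prodA_def PiE_def Pi_def)
  ultimately have "|G| <o \<kappa>" by simp
  thus False using G(2) not_ordLess_ordIso by blast
qed

lemma shrink_fin:
  fixes \<kappa> :: "'k rel" and G :: "('o::wellorder \<Rightarrow> 'o) set"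
  assumes reg: "regularCard \<kappa>" and ci: "Cinfinite \<kappa>"
    and G: "G \<subseteq> prodA A" "|G| =o \<kappa>" and small: "\<forall>a\<in>A. |{..<a}| <o \<kappa>"
    and U: "finite U" "U \<subseteq> A"
  shows "\<exists>G'\<subseteq>G. |G'| =o \<kappa> \<and> (\<forall>a\<in>U. \<exists>\<beta><a. \<forall>f\<in>G'. f a \<le> \<beta>)"
  using U
proof (induction U rule: finite_induct)
  case empty
  then show ?case using G(2) by blast
next
  case (insert x U)
  then obtain G1 where G1: "G1 \<subseteq> G" "|G1| =o \<kappa>" "\<forall>a\<in>U. \<exists>\<beta><a. \<forall>f\<in>G1. f a \<le> \<beta>" by auto
  obtain G2 where G2: "G2 \<subseteq> G1" "|G2| =o \<kappa>" "\<exists>\<beta><x. \<forall>f\<in>G2. f x \<le> \<beta>"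
    using shrink[OF reg ci _ G1(2), of A x] G1(1) G(1) small insert.prems by auto
  show ?case
    apply (rule exI[of _ G2]) using G1 G2 by blast
qed

theorem lemma5p1:
  fixes A :: "'o::wellorder set" and \<kappa> :: "'k rel" and F :: "('o \<Rightarrow> 'o) set"
  assumes "\<forall>a\<in>A. regular_cardinal a"
    and "\<not> (\<exists>m\<in>A. \<forall>a\<in>A. a \<le> m)"
    and "card_order \<kappa>"
    and "in_spec A \<kappa>"
    and "\<forall>a\<in>A. (card_of {..<a}, \<kappa>) \<in> ordLeq"
    and "F \<subseteq> prodA A"
    and "(card_of F, \<kappa>) \<in> ordIso"
    and "\<forall>G \<subseteq> F. (card_of G, \<kappa>) \<in> ordIso \<longrightarrow> unbounded_in_prod A G"
  shows "\<forall>F0 \<subseteq> F. (card_of F0, \<kappa>) \<in> ordIso \<longrightarrow> infinite (ub A F0)"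
proof (intro allI impI notI)
  fix F0 assume F0: "F0 \<subseteq> F" "|F0| =o \<kappa>" and fin: "finite (ub A F0)"
  have reg: "regularCard \<kappa>" and ci: "Cinfinite \<kappa>" using assms(4) by (auto simp: in_spec_def)
  have small: "\<forall>a\<in>A. |{..<a}| <o \<kappa>" using small_elem[OF assms(1,2,5)] by blast
  have "ub A F0 \<subseteq> A" by (auto simp: ub_def)
  then obtain G where G: "G \<subseteq> F0" "|G| =o \<kappa>" "\<forall>a\<in>ub A F0. \<exists>\<beta><a. \<forall>f\<in>G. f a \<le> \<beta>"
    using shrink_fin[OF reg ci _ F0(2) small fin] F0(1) assms(6) by blast
  have bd: "\<forall>a\<in>A. \<exists>\<beta><a. \<forall>f\<in>G. f a \<le> \<beta>"
  proof
    fix a assume a: "a \<in> A"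
    show "\<exists>\<beta><a. \<forall>f\<in>G. f a \<le> \<beta>"
    proof (cases "a \<in> ub A F0")
      case True then show ?thesis using G(3) by blast
    next
      case False then show ?thesis using a G(1) by (auto simp: ub_def)
    qed
  qed
  have "\<forall>a\<in>A. \<exists>\<gamma>. \<gamma> < a \<and> (\<forall>f\<in>G. f a < \<gamma>)"
  proof
    fix a assume a: "a \<in> A"
    obtain \<beta> where b: "\<beta> < a" "\<forall>f\<in>G. f a \<le> \<beta>" using bd a by blast
    obtain c where "\<beta> < c" "c < a" using between[OF _ b(1)] assms(1) a by blast
    thus "\<exists>\<gamma>. \<gamma> < a \<and> (\<forall>f\<in>G. f a < \<gamma>)" using b(2) le_less_trans by blast
  qed
  then obtain g where g: "\<forall>a\<in>A. g a < a \<and> (\<forall>f\<in>G. f a < g a)" by metis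
  have "restrict g A \<in> prodA A" using g by (auto simp: prodA_def)
  moreover have "\<forall>f\<in>G. ptw_less A f (restrict g A)" using g by (auto simp: ptw_less_def)
  ultimately have "\<not> unbounded_in_prod A G" by (auto simp: unbounded_in_prod_def)
  thus False using assms(8) G(1,2) F0(1) by blast
qed

end
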